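(* Let $D$ be a strongly connected tournament, let $\sigma=v_1,\dots,v_n$ be an ordering of $V(D)$, and suppose the feedback arc set $S$ with respect to $\sigma$ is a minimum feedback arc set of $D$ and the subdigraph $D_S$ arc-induced by $S$ is a directed star. Let $m$ be the number of (distinct) feedback intervals of $\sigma$ with respect to $S$, and let $k\ge 2$. Then $D$ is $k$-AW if and only if $\gcd(k,m)=1$.
   Context: A tournament is a digraph in which for every pair of distinct vertices $v,w$ exactly one of $vw$, $wv$ is an arc. Strongly connected: for any two vertices there are directed walks in both directions. For an ordering $\sigma=v_1,\dots,v_n$ of $V(D)$, the feedback arc set with respect to $\sigma$ is the set $S$ of arcs $v_jv_i\in A(D)$ with $i<j$; a minimum feedback arc set is a feedback arc set (with respect to some ordering) of minimum cardinality over all orderings. If $vw\in S$, $v$ is a tail feedback vertex and $w$ a head feedback vertex. For $B\subseteq A(D)$, the arc-induced subdigraph $D_B$ has arc set $B$ and vertex set the vertices incident with arcs of $B$. For $s,t\ge 0$, an $(s,t)$-directed star is a digraph with vertex set $\{v,u_1,\dots,u_s,w_1,\dots,w_t\}$ and arc set $\{u_iv, vw_j:1\le i\le s,1\le j\le t\}$; $v$ is its central vertex. A head feedback interval (resp. tail feedback interval) is a nonempty set of consecutive vertices $\{v_i,v_{i+1},\dots,v_j\}$ in $\sigma$ all of which are head (resp. tail) feedback vertices, such that neither $v_{i-1}$ nor $v_{j+1}$ (when they exist) is a head (resp. tail) feedback vertex. A feedback interval is a set that is a head feedback interval or a tail feedback interval (or both; a set that is both is counted once in $m$). The $k$-lights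 out game: start with a labeling $V(D)\to\mathbb{Z}_k$; toggling $v$ increases by $1$ mod $k$ the label of $v$ and of every $w$ with $vw\in A(D)$; the game is won when all labels are $0$. $D$ is $k$-AW if every labeling $V(D)\to\mathbb{Z}_k$ can be brought to the all-zero labeling by toggling. *)

theory Defs
  imports Main
begin

definition tournament :: "'a set \<Rightarrow> ('a \<times> 'a) set \<Rightarrow> bool" where
  "tournament V A \<longleftrightarrow> finite V \<and> A \<subseteq> V \<times> V \<and> (\<forall>v. (v, v) \<notin> A) \<and>
     (\<forall>v\<in>V. \<forall>w\<in>V. v \<noteq> w \<longrightarrow> ((v, w) \<in> A \<longleftrightarrow> (w, v) \<notin> A))"

definition strongly_connected :: "'a set \<Rightarrow> ('a \<times> 'a) set \<Rightarrow> bool" where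
  "strongly_connected V A \<longleftrightarrow> (\<forall>v\<in>V. \<forall>w\<in>V. (v, w) \<in> A\<^sup>* \<and> (w, v) \<in> A\<^sup>*)"

definition is_ordering :: "'a set \<Rightarrow> 'a list \<Rightarrow> bool" where
  "is_ordering V \<sigma> \<longleftrightarrow> distinct \<sigma> \<and> set \<sigma> = V"

definition fas :: "('a \<times> 'a) set \<Rightarrow> 'a list \<Rightarrow> ('a \<times> 'a) set" where
  "fas A \<sigma> = {(x, y) \<in> A. \<exists>i j. i < j \<and> j < length \<sigma> \<and> \<sigma> ! i = y \<and> \<sigma> ! j = x}"

definition min_fas :: "'a set \<Rightarrow> ('a \<times> 'a) set \<Rightarrow> 'a list \<Rightarrow> bool" where
  "min_fas V A \<sigma> \<longleftrightarrow> is_ordering V \<sigma> \<and>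
     (\<forall>\<tau>. is_ordering V \<tau> \<longrightarrow> card (fas A \<sigma>) \<le> card (fas A \<tau>))"

definition arc_verts :: "('a \<times> 'a) set \<Rightarrow> 'a set" where
  "arc_verts B = fst ` B \<union> snd ` B"

definition is_directed_star :: "('a \<times> 'a) set \<Rightarrow> bool" where
  "is_directed_star B \<longleftrightarrow> (\<exists>v U W. finite U \<and> finite W \<and> U \<inter> W = {} \<and> v \<notin> U \<and> v \<notin> W \<and>
      B = {(u, v) | u. u \<in> U} \<union> {(v, w) | w. w \<in> W} \<and>
      arc_verts B = insert v (U \<union> W))"

definition head_fv :: "('a \<times> 'a) set \<Rightarrow> 'a \<Rightarrow> bool" where
  "head_fv S w \<longleftrightarrow> (\<exists>v. (v, w) \<in> S)"

definition tail_fv :: "('a \<times> 'a) set \<Rightarrow> 'a \<Rightarrow> bool" where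
  "tail_fv S v \<longleftrightarrow> (\<exists>w. (v, w) \<in> S)"

definition intervals :: "('a \<Rightarrow> bool) \<Rightarrow> 'a list \<Rightarrow> 'a set set" where
  "intervals P \<sigma> = {(\<lambda>l. \<sigma> ! l) ` {i..j} | i j. i \<le> j \<and> j < length \<sigma> \<and>
      (\<forall>l\<in>{i..j}. P (\<sigma> ! l)) \<and>
      (i = 0 \<or> \<not> P (\<sigma> ! (i - 1))) \<and>
      (j + 1 = length \<sigma> \<or> \<not> P (\<sigma> ! (j + 1)))}"

definition feedback_intervals :: "('a \<times> 'a) set \<Rightarrow> 'a list \<Rightarrow> 'a set set" where
  "feedback_intervals S \<sigma> = intervals (head_fv S) \<sigma> \<union> intervals (tail_fv S) \<sigma>"

text \<open>Lights out: labels are naturals in {0..<k} representing Z_k.\<close>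
definition toggle :: "nat \<Rightarrow> ('a \<times> 'a) set \<Rightarrow> ('a \<Rightarrow> nat) \<Rightarrow> 'a \<Rightarrow> ('a \<Rightarrow> nat)" where
  "toggle k A f v = (\<lambda>u. if u = v \<or> (v, u) \<in> A then (f u + 1) mod k else f u)"

definition toggle_seq :: "nat \<Rightarrow> ('a \<times> 'a) set \<Rightarrow> 'a list \<Rightarrow> ('a \<Rightarrow> nat) \<Rightarrow> ('a \<Rightarrow> nat)" where
  "toggle_seq k A ts f = fold (\<lambda>v g. toggle k A g v) ts f"

definition k_AW :: "nat \<Rightarrow> 'a set \<Rightarrow> ('a \<times> 'a) set \<Rightarrow> bool" where
  "k_AW k V A \<longleftrightarrow> (\<forall>f. (\<forall>v\<in>V. f v < k) \<longrightarrow>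
     (\<exists>ts. set ts \<subseteq> V \<and> (\<forall>v\<in>V. toggle_seq k A ts f v = 0)))"

end

theory Submission
  imports Defs "HOL-Number_Theory.Cong" "HOL-Library.FuncSet"
begin
lemma toggle_seq_Cons: "toggle_seq k A (v#ts) f = toggle_seq k A ts (toggle k A f v)"
  by (simp add: toggle_seq_def)

lemma toggle_seq_mod:
  "toggle_seq k A ts f u mod k = (f u + length (filter (\<lambda>v. v = u \<or> (v,u)\<in>A) ts)) mod k"
proof (induction ts arbitrary: f)
  case Nil then show ?case by (simp add: toggle_seq_def)
next
  case (Cons v ts)
  show ?case unfolding toggle_seq_Cons Cons.IH
    by (auto simp: toggle_def mod_add_left_eq)
qed

lemma toggle_seq_lt: "0 < k \<Longrightarrow> f u < k \<Longrightarrow> toggle_seq k A ts f u < k"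
proof (induction ts arbitrary: f)
  case Nil then show ?case by (simp add: toggle_seq_def)
next
  case (Cons v ts)
  show ?case unfolding toggle_seq_Cons
    by (rule Cons.IH) (use Cons.prems in \<open>auto simp: toggle_def\<close>)
qed

lemma count_list_filter: "count_list (filter P ts) v = (if P v then count_list ts v else 0)"
  by (induction ts) auto

lemma set_nth_image: "set \<sigma> = (\<lambda>i. \<sigma>!i) ` {..<length \<sigma>}"
  by (auto simp: in_set_conv_nth)

lemma length_filter_count:
  assumes "distinct \<sigma>" "set ts \<subseteq> set \<sigma>"
  shows "length (filter P ts) = (\<Sum>i<length \<sigma>. if P (\<sigma>!i) then count_list ts (\<sigma>!i) else 0)"
proof -
  have "length (filter P ts) = sum (count_list (filter P ts)) (set \<sigma>)"
    using assms by (intro sum_count_set[symmetric]) auto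
  also have "\<dots> = sum (count_list (filter P ts)) ((\<lambda>i. \<sigma>!i) ` {..<length \<sigma>})"
    by (simp only: set_nth_image)
  also have "\<dots> = (\<Sum>i<length \<sigma>. count_list (filter P ts) (\<sigma>!i))"
    using assms(1) by (subst sum.reindex) (auto simp: inj_on_def nth_eq_iff_index_eq)
  finally show ?thesis by (simp add: count_list_filter)
qed

lemma length_filter_concat:
  "length (filter P (concat (map (\<lambda>i. replicate (c i) (\<sigma>!i)) [0..<n]))) =
    (\<Sum>i<n. if P (\<sigma>!i) then c i else 0)"
  by (induction n) (auto simp: filter_replicate)

lemma set_concat_sub: "n \<le> length \<sigma> \<Longrightarrow> set (concat (map (\<lambda>i. replicate (c i) (\<sigma>!i)) [0..<n])) \<subseteq> set \<sigma>"
  by auto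

definition Nv :: "('a \<times> 'a) set \<Rightarrow> 'a list \<Rightarrow> (nat \<Rightarrow> int) \<Rightarrow> nat \<Rightarrow> int" where
  "Nv A \<sigma> X j = (\<Sum>i<length \<sigma>. if \<sigma>!i = \<sigma>!j \<or> (\<sigma>!i, \<sigma>!j) \<in> A then X i else 0)"

lemma Nv_cong:
  assumes "\<And>i. i < length \<sigma> \<Longrightarrow> [X i = Y i] (mod k)"
  shows "[Nv A \<sigma> X j = Nv A \<sigma> Y j] (mod k)"
  unfolding Nv_def by (rule cong_sum) (auto intro: assms)

lemma Nv_diff: "Nv A \<sigma> (\<lambda>i. X i - Y i) j = Nv A \<sigma> X j - Nv A \<sigma> Y j"
  unfolding Nv_def by (simp add: sum_subtractf[symmetric]) (rule sum.cong, auto)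

lemma Nv_nat: "Nv A \<sigma> (\<lambda>i. int (c i)) j =
   int (\<Sum>i<length \<sigma>. if \<sigma>!i = \<sigma>!j \<or> (\<sigma>!i, \<sigma>!j) \<in> A then c i else 0)"
  unfolding Nv_def of_nat_sum by (rule sum.cong) auto

lemma bridge:
  assumes dist: "distinct \<sigma>" and V: "set \<sigma> = V" and k: "k > 0"
  shows "k_AW k V A \<longleftrightarrow> (\<forall>g. \<exists>X. \<forall>j<length \<sigma>. [Nv A \<sigma> X j = g j] (mod int k))"
proof
  assume AW: "k_AW k V A"
  show "\<forall>g. \<exists>X. \<forall>j<length \<sigma>. [Nv A \<sigma> X j = g j] (mod int k)"
  proof
    fix g :: "nat \<Rightarrow> int"
    define f where "f v = nat ((- g (THE i. i < length \<sigma> \<and> \<sigma>!i = v)) mod int k)" for v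
    have fj: "f (\<sigma>!j) = nat ((- g j) mod int k)" if "j < length \<sigma>" for j
    proof -
      have "(THE i. i < length \<sigma> \<and> \<sigma>!i = \<sigma>!j) = j"
        using that dist by (intro the_equality) (auto simp: nth_eq_iff_index_eq)
      then show ?thesis by (simp add: f_def)
    qed
    have "\<forall>v\<in>V. f v < k" using k unfolding f_def
      by (auto simp: nat_less_iff)
    with AW obtain ts where ts: "set ts \<subseteq> V" "\<forall>v\<in>V. toggle_seq k A ts f v = 0"
      unfolding k_AW_def by blast
    define X where "X = (\<lambda>i. int (count_list ts (\<sigma>!i)))"
    have "[Nv A \<sigma> X j = g j] (mod int k)" if j: "j < length \<sigma>" for j
    proof -
      have "toggle_seq k A ts f (\<sigma>!j) = 0" using ts j V by auto
      hence "(f (\<sigma>!j) + length (filter (\<lambda>v. v = \<sigma>!j \<or> (v,\<sigma>!j)\<in>A) ts)) mod k = 0"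
        using toggle_seq_mod[of k A ts f "\<sigma>!j"] by simp
      moreover have L: "Nv A \<sigma> X j = int (length (filter (\<lambda>v. v = \<sigma>!j \<or> (v,\<sigma>!j)\<in>A) ts))"
        unfolding X_def Nv_nat using length_filter_count[OF dist, of ts] ts(1) V by simp
      ultimately have "(int (f (\<sigma>!j)) + Nv A \<sigma> X j) mod int k = 0"
        unfolding L by (simp flip: of_nat_add of_nat_mod)
      hence c1: "[int (f (\<sigma>!j)) + Nv A \<sigma> X j = 0] (mod int k)"
        by (simp add: cong_def)
      have c2: "[int (f (\<sigma>!j)) = - g j] (mod int k)"
        using fj[OF j] k by (simp add: cong_def)
      have "[- g j + Nv A \<sigma> X j = 0] (mod int k)"
        using cong_add[OF cong_sym[OF c2] cong_refl[of "Nv A \<sigma> X j"]] c1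
        by (rule cong_trans)
      hence "[g j + (- g j + Nv A \<sigma> X j) = g j + 0] (mod int k)"
        by (rule cong_add[OF cong_refl])
      then show ?thesis by simp
    qed
    then show "\<exists>X. \<forall>j<length \<sigma>. [Nv A \<sigma> X j = g j] (mod int k)" by blast
  qed
next
  assume S: "\<forall>g. \<exists>X. \<forall>j<length \<sigma>. [Nv A \<sigma> X j = g j] (mod int k)"
  show "k_AW k V A" unfolding k_AW_def
  proof (intro allI impI)
    fix f assume f: "\<forall>v\<in>V. f v < k"
    obtain X where X: "\<forall>j<length \<sigma>. [Nv A \<sigma> X j = - int (f (\<sigma>!j))] (mod int k)"
      using spec[OF S, of "\<lambda>j. - int (f (\<sigma>!j))"] by blast
    define c where "c i = nat (X i mod int k)" for i
    define ts where "ts = concat (map (\<lambda>i. replicate (c i) (\<sigma>!i)) [0..<length \<sigma>])"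
    have tsV: "set ts \<subseteq> V" unfolding ts_def using set_concat_sub[of "length \<sigma>" \<sigma> c] V by simp
    have "toggle_seq k A ts f v = 0" if v: "v \<in> V" for v
    proof -
      obtain j where j: "j < length \<sigma>" "v = \<sigma>!j" using v V by (auto simp: in_set_conv_nth)
      have lt: "toggle_seq k A ts f v < k" using toggle_seq_lt[of k f v] f v k by auto
      have cX: "[int (c i) = X i] (mod int k)" for i
        unfolding c_def using k by (simp add: cong_def)
      have L: "int (length (filter (\<lambda>w. w = v \<or> (w,v)\<in>A) ts)) = Nv A \<sigma> (\<lambda>i. int (c i)) j"
        unfolding ts_def length_filter_concat Nv_nat j(2) by simp
      have h1: "[Nv A \<sigma> (\<lambda>i. int (c i)) j = Nv A \<sigma> X j] (mod int k)"
        using Nv_cong[of \<sigma> "\<lambda>i. int (c i)" X "int k" A j] cX by blast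
      have h2: "[Nv A \<sigma> X j = - int (f v)] (mod int k)" using X j by simp
      have "[int (f v) + Nv A \<sigma> (\<lambda>i. int (c i)) j = int (f v) + - int (f v)] (mod int k)"
        by (rule cong_add[OF cong_refl cong_trans[OF h1 h2]])
      hence "int (f v + length (filter (\<lambda>w. w = v \<or> (w,v)\<in>A) ts)) mod int k = 0"
        unfolding L[symmetric] by (simp add: cong_def)
      hence "int ((f v + length (filter (\<lambda>w. w = v \<or> (w,v)\<in>A) ts)) mod k) = 0"
        by (simp only: of_nat_mod)
      hence "(f v + length (filter (\<lambda>w. w = v \<or> (w,v)\<in>A) ts)) mod k = 0"
        by simp
      hence "toggle_seq k A ts f v mod k = 0" using toggle_seq_mod[of k A ts f v] by simp
      then show ?thesis using lt by simp
    qed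
    then show "\<exists>ts. set ts \<subseteq> V \<and> (\<forall>v\<in>V. toggle_seq k A ts f v = 0)" using tsV by blast
  qed
qed

lemma surj_iff_inj:
  assumes k: "k > (0::int)"
  shows "(\<forall>g. \<exists>X. \<forall>j<length \<sigma>. [Nv A \<sigma> X j = g j] (mod k)) \<longleftrightarrow>
         (\<forall>X. (\<forall>j<length \<sigma>. [Nv A \<sigma> X j = 0] (mod k)) \<longrightarrow> (\<forall>i<length \<sigma>. [X i = 0] (mod k)))"
proof -
  define n where "n = length \<sigma>"
  define F where "F = PiE {..<n} (\<lambda>_. {0..<k})"
  define \<Phi> where "\<Phi> X = restrict (\<lambda>j. Nv A \<sigma> X j mod k) {..<n}" for X
  define red where "red X = restrict (\<lambda>i. X i mod k) {..<n}" for X :: "nat \<Rightarrow> int"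
  have finF: "finite F" unfolding F_def by (intro finite_PiE) auto
  have PhiF: "\<Phi> ` F \<subseteq> F"
  proof
    fix G assume "G \<in> \<Phi> ` F"
    then obtain X where "G = \<Phi> X" by blast
    then show "G \<in> F" unfolding F_def \<Phi>_def using k by (simp add: restrict_PiE_iff)
  qed
  have redF: "red X \<in> F" for X unfolding F_def red_def using k by (simp add: restrict_PiE_iff)
  have Nv_red: "[Nv A \<sigma> (red X) j = Nv A \<sigma> X j] (mod k)" for X j
    by (rule Nv_cong) (auto simp: red_def n_def cong_def)
  have Phi_eq: "\<Phi> X = \<Phi> Y \<longleftrightarrow> (\<forall>j<n. [Nv A \<sigma> X j = Nv A \<sigma> Y j] (mod k))" for X Y
  proof
    assume "\<Phi> X = \<Phi> Y"
    then show "\<forall>j<n. [Nv A \<sigma> X j = Nv A \<sigma> Y j] (mod k)"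
      unfolding \<Phi>_def cong_def by (metis lessThan_iff restrict_apply')
  next
    assume "\<forall>j<n. [Nv A \<sigma> X j = Nv A \<sigma> Y j] (mod k)"
    then show "\<Phi> X = \<Phi> Y" unfolding \<Phi>_def cong_def by (intro ext) auto
  qed
  show ?thesis
  proof
    assume S: "\<forall>g. \<exists>X. \<forall>j<length \<sigma>. [Nv A \<sigma> X j = g j] (mod k)"
    have "F \<subseteq> \<Phi> ` F"
    proof
      fix G assume G: "G \<in> F"
      obtain X where X: "\<forall>j<n. [Nv A \<sigma> X j = G j] (mod k)" using spec[OF S, of G] n_def by blast
      have "\<Phi> (red X) = G"
      proof (rule ext)
        fix j show "\<Phi> (red X) j = G j"
        proof (cases "j < n")
          case True
          have "[Nv A \<sigma> (red X) j = G j] (mod k)" using cong_trans[OF Nv_red X[rule_format, OF True]] .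
          moreover have "G j \<in> {0..<k}" using PiE_mem[OF G[unfolded F_def], of j] True by simp
          ultimately show ?thesis using True unfolding \<Phi>_def cong_def by simp
        next
          case False
          then show ?thesis using PiE_arb[OF G[unfolded F_def], of j] unfolding \<Phi>_def by simp
        qed
      qed
      then show "G \<in> \<Phi> ` F" using redF by blast
    qed
    then have inj: "inj_on \<Phi> F" using finite_surj_inj[OF finF] by blast
    show "\<forall>X. (\<forall>j<length \<sigma>. [Nv A \<sigma> X j = 0] (mod k)) \<longrightarrow> (\<forall>i<length \<sigma>. [X i = 0] (mod k))"
    proof (intro allI impI)
      fix X i assume K: "\<forall>j<length \<sigma>. [Nv A \<sigma> X j = 0] (mod k)" and i: "i < length \<sigma>"
      have Z: "Nv A \<sigma> (red (\<lambda>_. 0)) j = 0" for j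
        unfolding Nv_def red_def n_def by (rule sum.neutral) auto
      have "\<Phi> (red X) = \<Phi> (red (\<lambda>_. 0))"
        unfolding Phi_eq Z using Nv_red K n_def by (metis cong_trans)
      hence "red X = red (\<lambda>_. 0)" using inj redF by (meson inj_onD)
      hence "red X i = red (\<lambda>_. 0) i" by simp
      then show "[X i = 0] (mod k)" using i unfolding red_def n_def cong_def by simp
    qed
  next
    assume K: "\<forall>X. (\<forall>j<length \<sigma>. [Nv A \<sigma> X j = 0] (mod k)) \<longrightarrow> (\<forall>i<length \<sigma>. [X i = 0] (mod k))"
    have inj: "inj_on \<Phi> F"
    proof (rule inj_onI)
      fix X Y assume X: "X \<in> F" and Y: "Y \<in> F" and e: "\<Phi> X = \<Phi> Y"
      have "\<forall>j<n. [Nv A \<sigma> (\<lambda>i. X i - Y i) j = 0] (mod k)"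
        using e unfolding Phi_eq Nv_diff by (simp add: cong_iff_dvd_diff)
      hence D: "\<forall>i<n. [X i - Y i = 0] (mod k)" using spec[OF K, of "\<lambda>i. X i - Y i"] n_def by blast
      show "X = Y"
      proof (rule ext)
        fix i show "X i = Y i"
        proof (cases "i < n")
          case True
          have "X i \<in> {0..<k}" "Y i \<in> {0..<k}" using PiE_mem[OF X[unfolded F_def], of i] PiE_mem[OF Y[unfolded F_def], of i] True by simp_all
          moreover have "X i mod k = Y i mod k" using D True by (simp add: cong_iff_dvd_diff mod_eq_dvd_iff)
          ultimately show ?thesis by simp
        next
          case False
          then show ?thesis using PiE_arb[OF X[unfolded F_def], of i] PiE_arb[OF Y[unfolded F_def], of i] by simp
        qed
      qed
    qed
    have surj: "\<Phi> ` F = F" by (rule endo_inj_surj[OF finF PhiF inj])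
    show "\<forall>g. \<exists>X. \<forall>j<length \<sigma>. [Nv A \<sigma> X j = g j] (mod k)"
    proof
      fix g :: "nat \<Rightarrow> int"
      have "restrict (\<lambda>j. g j mod k) {..<n} \<in> F" unfolding F_def using k by (simp add: restrict_PiE_iff)
      then obtain X where "\<Phi> X = restrict (\<lambda>j. g j mod k) {..<n}" using surj by (metis imageE)
      hence "\<forall>j<n. Nv A \<sigma> X j mod k = g j mod k" unfolding \<Phi>_def by (metis lessThan_iff restrict_apply')
      then show "\<exists>X. \<forall>j<length \<sigma>. [Nv A \<sigma> X j = g j] (mod k)" unfolding cong_def n_def by blast
    qed
  qed
qed

locale starpos =
  fixes A :: "('a \<times> 'a) set" and \<sigma> :: "'a list" and p :: nat and U W :: "'a set"
  assumes dist: "distinct \<sigma>"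
    and p_lt: "p < length \<sigma>"
    and irr: "\<And>v. (v, v) \<notin> A"
    and tour: "\<And>i j. i < length \<sigma> \<Longrightarrow> j < length \<sigma> \<Longrightarrow> i \<noteq> j \<Longrightarrow>
                 (\<sigma>!i, \<sigma>!j) \<in> A \<longleftrightarrow> (\<sigma>!j, \<sigma>!i) \<notin> A"
    and fasc: "\<And>i j. i < length \<sigma> \<Longrightarrow> j < length \<sigma> \<Longrightarrow>
                 ((\<sigma>!i, \<sigma>!j) \<in> A \<and> j < i) \<longleftrightarrow> ((\<sigma>!i \<in> U \<and> j = p) \<or> (i = p \<and> \<sigma>!j \<in> W))"
    and min1: "p + 1 < length \<sigma> \<Longrightarrow> \<sigma>!(p+1) \<notin> U"
    and min2: "0 < p \<Longrightarrow> \<sigma>!(p-1) \<notin> W"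
begin

abbreviation "n \<equiv> length \<sigma>"
definition "u i \<longleftrightarrow> i < n \<and> \<sigma>!i \<in> U"
definition "w i \<longleftrightarrow> i < n \<and> \<sigma>!i \<in> W"

lemma u_gt: "u i \<Longrightarrow> p < i"
  using fasc[of i p] p_lt unfolding u_def by auto

lemma w_lt: "w i \<Longrightarrow> i < p"
  using fasc[of p i] p_lt unfolding w_def by auto

lemma aux1: "\<not> (b1 \<and> b2) \<Longrightarrow> (if \<not> (b1 \<or> b2) then x else 0) = (if True then x else 0) + (if False then x else 0)
   - (if b2 then x else (0::int)) + (if False then x else 0) - (if b1 then x else 0)"
  by auto

lemma aux3: "\<not> (b1 \<and> b2) \<Longrightarrow> (if b1 \<or> b2 then x else 0) = (if False then x else 0) + (if b1 then x else 0)
   - (if False then x else (0::int)) + (if b2 then x else 0) - (if False then x else 0)"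
  by auto

lemma nup: "\<not> u p" and nwp: "\<not> w p"
  using u_gt w_lt by blast+

lemma coef:
  fixes X :: "nat \<Rightarrow> int"
  assumes i: "i < n" and j: "j < n"
  shows "(if \<sigma>!i = \<sigma>!j \<or> (\<sigma>!i, \<sigma>!j) \<in> A then X i else 0) =
    (if i \<le> j then X i else 0) + (if j = p \<and> u i then X i else 0) - (if j = p \<and> w i then X i else 0)
    + (if w j \<and> i = p then X i else 0) - (if u j \<and> i = p then X i else 0)"
proof -
  consider "i < j" | "i = j" | "j < i" by linarith
  then show ?thesis
  proof cases
    case 1
    have ne: "\<sigma>!i \<noteq> \<sigma>!j" using 1 i j dist by (auto simp: nth_eq_iff_index_eq)
    have a: "(\<sigma>!i = \<sigma>!j \<or> (\<sigma>!i, \<sigma>!j) \<in> A) = (\<not> ((u j \<and> i = p) \<or> (j = p \<and> w i)))"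
      using tour[OF i j] fasc[OF j i] 1 ne i j unfolding u_def w_def by auto
    have b: "(j = p \<and> u i) = False" "(w j \<and> i = p) = False" "(i \<le> j) = True"
      using u_gt w_lt 1 by force+
    have c: "\<not> ((u j \<and> i = p) \<and> (j = p \<and> w i))" using 1 by auto
    show ?thesis unfolding a b by (rule aux1[OF c])
  next
    case 2
    have "\<not> u p" "\<not> w p" using u_gt w_lt by blast+
    then show ?thesis using 2 by auto
  next
    case 3
    have ne: "\<sigma>!i \<noteq> \<sigma>!j" using 3 i j dist by (auto simp: nth_eq_iff_index_eq)
    have a: "(\<sigma>!i = \<sigma>!j \<or> (\<sigma>!i, \<sigma>!j) \<in> A) = ((j = p \<and> u i) \<or> (w j \<and> i = p))"
      using fasc[OF i j] 3 ne i j unfolding u_def w_def by auto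
    have b: "(j = p \<and> w i) = False" "(u j \<and> i = p) = False" "(i \<le> j) = False"
      using u_gt w_lt 3 by force+
    have c: "\<not> ((j = p \<and> u i) \<and> (w j \<and> i = p))" using 3 by auto
    show ?thesis unfolding a b by (rule aux3[OF c])
  qed
qed

lemma SI:
  assumes j: "j < n"
  shows "Nv A \<sigma> X j = (\<Sum>i<j+1. X i)
     + (if j = p then (\<Sum>i<n. if u i then X i else 0) else 0) - (if j = p then (\<Sum>i<n. if w i then X i else 0) else 0)
     + (if w j then X p else 0) - (if u j then X p else 0)"
proof -
  have "Nv A \<sigma> X j = (\<Sum>i<n. (if i \<le> j then X i else 0) + (if j = p \<and> u i then X i else 0) - (if j = p \<and> w i then X i else 0)
    + (if w j \<and> i = p then X i else 0) - (if u j \<and> i = p then X i else 0))"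
    unfolding Nv_def by (rule sum.cong[OF refl], rule coef) (use j in auto)
  also have "\<dots> = (\<Sum>i<n. if i \<le> j then X i else 0) + (\<Sum>i<n. if j = p \<and> u i then X i else 0)
     - (\<Sum>i<n. if j = p \<and> w i then X i else 0)
    + (\<Sum>i<n. if w j \<and> i = p then X i else 0) - (\<Sum>i<n. if u j \<and> i = p then X i else 0)"
    by (simp add: sum.distrib sum_subtractf)
  also have "(\<Sum>i<n. if i \<le> j then X i else 0) = (\<Sum>i<j+1. X i)"
  proof -
    have "(\<Sum>i<n. if i \<le> j then X i else 0) = sum X {i\<in>{..<n}. i \<le> j}"
      by (rule sum.inter_filter[symmetric]) simp
    also have "{i\<in>{..<n}. i \<le> j} = {..<j+1}" using j by auto
    finally show ?thesis .
  qed
  also have "(\<Sum>i<n. if j = p \<and> u i then X i else 0) = (if j = p then (\<Sum>i<n. if u i then X i else 0) else 0)"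
    by (cases "j = p") simp_all
  also have "(\<Sum>i<n. if j = p \<and> w i then X i else 0) = (if j = p then (\<Sum>i<n. if w i then X i else 0) else 0)"
    by (cases "j = p") simp_all
  also have "(\<Sum>i<n. if w j \<and> i = p then X i else 0) = (if w j then X p else 0)"
    using p_lt by (cases "w j") simp_all
  also have "(\<Sum>i<n. if u j \<and> i = p then X i else 0) = (if u j then X p else 0)"
    using p_lt by (cases "u j") simp_all
  finally show ?thesis .
qed

end

context starpos begin

definition e :: "nat \<Rightarrow> int" where
  "e i = (if u i \<or> i = p then 1 else if w i then -1 else 0)"
definition e' :: "nat \<Rightarrow> int" where
  "e' i = (if i = 0 then 0 else e (i - 1))"
definition mc :: int where
  "mc = 1 + (\<Sum>i<n. if u i then 1 - e' i else 0) + (\<Sum>i<n. if w i then 1 + e' i else 0)"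

lemmas not_up = nup and not_wp = nwp

lemma e'_p: "e' p = 0"
proof (cases "p = 0")
  case False
  have "\<not> u (p - 1)" using u_gt False by fastforce
  moreover have "\<not> w (p - 1)" using min2 False unfolding w_def by auto
  ultimately show ?thesis using False unfolding e'_def e_def by auto
next
  case True
  show ?thesis unfolding e'_def using True by simp
qed

lemma e_u: "u i \<Longrightarrow> e i = 1" and e_w: "w i \<Longrightarrow> e i = -1"
  unfolding e_def using not_up not_wp u_gt w_lt by fastforce+

lemma e_other: "i \<noteq> p \<Longrightarrow> e i = (if u i then 1 else 0) - (if w i then 1 else 0)"
  unfolding e_def using u_gt w_lt by fastforce

lemma telescope: "(\<Sum>i<j+1. e i - e' i) = e j"
  by (induction j) (auto simp: e'_def)

lemma SI_other:
  assumes j: "j < n" and jp: "j \<noteq> p"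
  shows "Nv A \<sigma> X j = (\<Sum>i<j+1. X i) + (if w j then X p else 0) - (if u j then X p else 0)"
  using SI[OF j, of X] jp by simp

lemma SI_p:
  shows "Nv A \<sigma> X p = (\<Sum>i<p+1. X i) + (\<Sum>i<n. if u i then X i else 0) - (\<Sum>i<n. if w i then X i else 0)"
  using SI[OF p_lt, of X] not_up not_wp by simp

lemma kernel_fwd:
  assumes K: "\<forall>j<n. [Nv A \<sigma> X j = 0] (mod k)"
  shows "\<forall>i<n. [X i = X p * (e i - e' i)] (mod k)" and "[mc * X p = 0] (mod k)"
proof -
  define y where "y = X p"
  define Q where "Q j = (\<Sum>i<j. X i)" for j
  have Q1: "[Q (j+1) = y * e j] (mod k)" if j: "j < n" for j
  proof (cases "j = p")
    case False
    have K1: "[Nv A \<sigma> X j = 0] (mod k)" using K j by blast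
    have eq: "Nv A \<sigma> X j + ((if u j then y else 0) - (if w j then y else 0)) = Q (j+1)"
      unfolding SI_other[OF j False] Q_def y_def by simp
    have "[Nv A \<sigma> X j + ((if u j then y else 0) - (if w j then y else 0)) = 0 + ((if u j then y else 0) - (if w j then y else 0))] (mod k)"
      by (rule cong_add[OF K1 cong_refl])
    hence "[Q (j+1) = (if u j then y else 0) - (if w j then y else 0)] (mod k)" unfolding eq by simp
    moreover have "y * e j = (if u j then y else 0) - (if w j then y else 0)"
      unfolding e_other[OF False] by simp
    ultimately show ?thesis by simp
  next
    case True
    show ?thesis
    proof (cases "p = 0")
      case True
      then show ?thesis using \<open>j = p\<close> unfolding Q_def y_def e_def by simp
    next
      case False
      have nu: "\<not> u (p - 1)" using u_gt False by fastforce
      have nw: "\<not> w (p - 1)" using min2 False unfolding w_def by auto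
      have pp: "p - 1 \<noteq> p" "p - 1 < n" using False p_lt by auto
      have K1: "[Nv A \<sigma> X (p - 1) = 0] (mod k)" using K pp by blast
      have "Nv A \<sigma> X (p - 1) = Q p"
        unfolding SI_other[OF pp(2) pp(1)] Q_def using nu nw False by simp
      hence Qp: "[Q p = 0] (mod k)" using K1 by simp
      have "Q (p+1) = Q p + y" unfolding Q_def y_def by simp
      hence "[Q (p+1) = 0 + y] (mod k)" using cong_add[OF Qp cong_refl[of y]] by simp
      then show ?thesis using True unfolding e_def by simp
    qed
  qed
  have Q0: "[Q i = y * e' i] (mod k)" if i: "i < n" for i
  proof (cases "i = 0")
    case True then show ?thesis unfolding Q_def e'_def by simp
  next
    case False
    then show ?thesis using Q1[of "i - 1"] i unfolding e'_def by simp
  qed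
  have Xi: "[X i = y * (e i - e' i)] (mod k)" if i: "i < n" for i
  proof -
    have c: "[Q (i+1) - Q i = y * e i - y * e' i] (mod k)"
      using Q1[OF i] Q0[OF i] by (rule cong_diff)
    have eqX: "Q (i+1) - Q i = X i" unfolding Q_def by simp
    have "y * (e i - e' i) = y * e i - y * e' i" by (simp add: right_diff_distrib)
    then show ?thesis using c unfolding eqX by simp
  qed
  then show "\<forall>i<n. [X i = X p * (e i - e' i)] (mod k)" unfolding y_def by blast
  have Kp: "[Nv A \<sigma> X p = 0] (mod k)" using K p_lt by blast
  have su: "[(\<Sum>i<n. if u i then X i else 0) = (\<Sum>i<n. if u i then y * (1 - e' i) else 0)] (mod k)"
  proof (rule cong_sum)
    fix i assume i: "i \<in> {..<n}"
    show "[(if u i then X i else 0) = (if u i then y * (1 - e' i) else 0)] (mod k)"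
    proof (cases "u i")
      case True
      have "[X i = y * (e i - e' i)] (mod k)" using Xi i by simp
      then show ?thesis using True e_u[OF True] by simp
    qed simp
  qed
  have sw: "[(\<Sum>i<n. if w i then X i else 0) = (\<Sum>i<n. if w i then y * (-1 - e' i) else 0)] (mod k)"
  proof (rule cong_sum)
    fix i assume i: "i \<in> {..<n}"
    show "[(if w i then X i else 0) = (if w i then y * (-1 - e' i) else 0)] (mod k)"
    proof (cases "w i")
      case True
      have "[X i = y * (e i - e' i)] (mod k)" using Xi i by simp
      then show ?thesis using True e_w[OF True] by simp
    qed simp
  qed
  have "[Q (p+1) + (\<Sum>i<n. if u i then X i else 0) - (\<Sum>i<n. if w i then X i else 0) =
         y * e p + (\<Sum>i<n. if u i then y * (1 - e' i) else 0) - (\<Sum>i<n. if w i then y * (-1 - e' i) else 0)] (mod k)"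
    by (intro cong_add cong_diff Q1 p_lt su sw)
  moreover have "Q (p+1) + (\<Sum>i<n. if u i then X i else 0) - (\<Sum>i<n. if w i then X i else 0) = Nv A \<sigma> X p"
    unfolding SI_p Q_def by simp
  moreover have "y * e p + (\<Sum>i<n. if u i then y * (1 - e' i) else 0) - (\<Sum>i<n. if w i then y * (-1 - e' i) else 0)
     = mc * y"
  proof -
    have a: "(\<Sum>i<n. if u i then y * (1 - e' i) else 0) = y * (\<Sum>i<n. if u i then 1 - e' i else 0)"
      unfolding sum_distrib_left by (rule sum.cong) auto
    have b: "(\<Sum>i<n. if w i then y * (-1 - e' i) else 0) = - y * (\<Sum>i<n. if w i then 1 + e' i else 0)"
      unfolding sum_distrib_left by (rule sum.cong) (auto simp: algebra_simps)
    have ep: "e p = 1" unfolding e_def by simp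
    show ?thesis unfolding a b mc_def ep by (simp add: algebra_simps)
  qed
  ultimately have "[Nv A \<sigma> X p = mc * y] (mod k)" by simp
  hence "[mc * y = 0] (mod k)" using cong_trans[OF cong_sym Kp] by blast
  then show "[mc * X p = 0] (mod k)" unfolding y_def .
qed

lemma kernel_bwd:
  fixes y k :: int
  defines "X \<equiv> (\<lambda>i. y * (e i - e' i))"
  assumes M: "[mc * y = 0] (mod k)"
  shows "\<forall>j<n. [Nv A \<sigma> X j = 0] (mod k)" and "X p = y"
proof -
  show Xp: "X p = y" unfolding X_def using e'_p by (simp add: e_def)
  have Q: "(\<Sum>i<j+1. X i) = y * e j" for j
  proof -
    have "(\<Sum>i<j+1. X i) = y * (\<Sum>i<j+1. e i - e' i)" unfolding X_def by (rule sum_distrib_left[symmetric])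
    then show ?thesis by (simp only: telescope)
  qed
  show "\<forall>j<n. [Nv A \<sigma> X j = 0] (mod k)"
  proof (intro allI impI)
    fix j assume j: "j < n"
    show "[Nv A \<sigma> X j = 0] (mod k)"
    proof (cases "j = p")
      case False
      have "Nv A \<sigma> X j = 0"
        unfolding SI_other[OF j False] Q[of j] e_other[OF False] Xp by simp
      then show ?thesis by simp
    next
      case True
      have a: "(\<Sum>i<n. if u i then X i else 0) = y * (\<Sum>i<n. if u i then 1 - e' i else 0)"
        unfolding X_def sum_distrib_left by (rule sum.cong) (auto simp: e_u)
      have b: "(\<Sum>i<n. if w i then X i else 0) = - y * (\<Sum>i<n. if w i then 1 + e' i else 0)"
        unfolding X_def sum_distrib_left by (rule sum.cong) (auto simp: e_w algebra_simps)
      have ep: "e p = 1" unfolding e_def by simp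
      have "Nv A \<sigma> X j = mc * y"
        unfolding True SI_p Q[of p] a b mc_def ep by (simp add: algebra_simps)
      then show ?thesis using M by (simp add: cong_def)
    qed
  qed
qed

lemma kernel_iff:
  assumes k: "k > 0"
  shows "(\<forall>X. (\<forall>j<n. [Nv A \<sigma> X j = 0] (mod k)) \<longrightarrow> (\<forall>i<n. [X i = 0] (mod k))) \<longleftrightarrow> coprime k mc"
proof
  assume K: "\<forall>X. (\<forall>j<n. [Nv A \<sigma> X j = 0] (mod k)) \<longrightarrow> (\<forall>i<n. [X i = 0] (mod k))"
  show "coprime k mc"
  proof (rule ccontr)
    assume nc: "\<not> coprime k mc"
    define d where "d = gcd k mc"
    have d1: "d \<noteq> 1" using nc unfolding d_def by (simp add: coprime_iff_gcd_eq_1)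
    have dpos: "d > 0" using k unfolding d_def by simp
    have dk: "d dvd k" "d dvd mc" unfolding d_def by auto
    define y where "y = k div d"
    have yk: "k = y * d" using dk unfolding y_def by simp
    have d2: "d \<ge> 2" using dpos d1 by simp
    have "0 < y * d" using yk k by simp
    hence y0: "0 < y" using dpos by (simp add: zero_less_mult_iff)
    have "y * 1 < y * d" using y0 d2 by (intro mult_strict_left_mono) auto
    hence ypos: "0 < y" "y < k" using y0 yk by simp_all
    have "[mc * y = 0] (mod k)"
    proof -
      obtain t where "mc = d * t" using dk by blast
      hence "mc * y = t * k" using yk by simp
      then show ?thesis by (simp add: cong_def)
    qed
    note kb = kernel_bwd[OF this]
    have "[(\<lambda>i. y * (e i - e' i)) p = 0] (mod k)" using spec[OF K, of "\<lambda>i. y * (e i - e' i)"] kb(1) p_lt by blast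
    hence "[y = 0] (mod k)" unfolding kb(2) .
    then show False using ypos by (simp add: cong_def)
  qed
next
  assume cp: "coprime k mc"
  show "\<forall>X. (\<forall>j<n. [Nv A \<sigma> X j = 0] (mod k)) \<longrightarrow> (\<forall>i<n. [X i = 0] (mod k))"
  proof (intro allI impI)
    fix X i assume K: "\<forall>j<n. [Nv A \<sigma> X j = 0] (mod k)" and i: "i < n"
    have "[mc * X p = 0] (mod k)" using kernel_fwd(2)[OF K] .
    hence "k dvd mc * X p" by (simp add: cong_0_iff)
    hence "k dvd X p" using cp by (simp add: coprime_dvd_mult_right_iff)
    hence "[X p * (e i - e' i) = 0] (mod k)" by (simp add: cong_0_iff)
    then show "[X i = 0] (mod k)" using kernel_fwd(1)[OF K] i cong_trans by blast
  qed
qed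

end

lemma card_intervals:
  assumes dist: "distinct \<sigma>"
  shows "card (intervals P \<sigma>) = card {i. i < length \<sigma> \<and> P (\<sigma>!i) \<and> (i = 0 \<or> \<not> P (\<sigma>!(i-1)))}"
proof -
  define n where "n = length \<sigma>"
  define St where "St = {i. i < length \<sigma> \<and> P (\<sigma>!i) \<and> (i = 0 \<or> \<not> P (\<sigma>!(i-1)))}"
  define R where "R i = {j. i \<le> j \<and> j < n \<and> (\<forall>l\<in>{i..j}. P (\<sigma>!l))}" for i
  define J where "J i = Max (R i)" for i
  have finR: "finite (R i)" for i unfolding R_def by (rule finite_subset[of _ "{..<n}"]) auto
  have uniq: "J i = j" if "i \<le> j" "j < n" "\<forall>l\<in>{i..j}. P (\<sigma>!l)" "j + 1 = n \<or> \<not> P (\<sigma>!(j+1))" for i j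
    unfolding J_def
  proof (rule Max_eqI[OF finR])
    show "j \<in> R i" using that unfolding R_def by auto
  next
    fix j' assume "j' \<in> R i"
    hence j': "i \<le> j'" "j' < n" "\<forall>l\<in>{i..j'}. P (\<sigma>!l)" unfolding R_def by auto
    show "j' \<le> j"
    proof (rule ccontr)
      assume "\<not> j' \<le> j"
      hence "j + 1 \<in> {i..j'}" "j + 1 < n" using j' that by auto
      then show False using j'(3) that(4) by auto
    qed
  qed
  have Jprops: "i \<le> J i \<and> J i < n \<and> (\<forall>l\<in>{i..J i}. P (\<sigma>!l)) \<and> (J i + 1 = n \<or> \<not> P (\<sigma>!(J i+1)))"
    if i: "i \<in> St" for i
  proof -
    have "i \<in> R i" using i unfolding R_def St_def n_def by auto
    hence ne: "R i \<noteq> {}" by blast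
    have "J i \<in> R i" unfolding J_def using Max_in[OF finR ne] .
    hence a: "i \<le> J i" "J i < n" "\<forall>l\<in>{i..J i}. P (\<sigma>!l)" unfolding R_def by auto
    have "J i + 1 = n \<or> \<not> P (\<sigma>!(J i+1))"
    proof (rule ccontr)
      assume "\<not> (J i + 1 = n \<or> \<not> P (\<sigma>!(J i+1)))"
      hence "J i + 1 \<in> R i" using a unfolding R_def by (auto simp: le_Suc_eq)
      hence "J i + 1 \<le> J i" unfolding J_def using Max_ge[OF finR] by blast
      then show False by simp
    qed
    then show ?thesis using a by blast
  qed
  define g where "g i = (\<lambda>l. \<sigma>!l) ` {i..J i}" for i
  have eq: "intervals P \<sigma> = g ` St"
  proof
    show "intervals P \<sigma> \<subseteq> g ` St"
    proof
      fix I assume "I \<in> intervals P \<sigma>"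
      then obtain i j where ij: "I = (\<lambda>l. \<sigma>!l) ` {i..j}" "i \<le> j" "j < n" "\<forall>l\<in>{i..j}. P (\<sigma>!l)"
        "i = 0 \<or> \<not> P (\<sigma>!(i-1))" "j + 1 = n \<or> \<not> P (\<sigma>!(j+1))"
        unfolding intervals_def n_def by blast
      have "i \<in> St" using ij unfolding St_def n_def by auto
      moreover have "J i = j" using uniq ij by blast
      ultimately show "I \<in> g ` St" using ij(1) unfolding g_def by blast
    qed
  next
    show "g ` St \<subseteq> intervals P \<sigma>"
    proof
      fix I assume "I \<in> g ` St"
      then obtain i where i: "i \<in> St" "I = g i" by blast
      have "i = 0 \<or> \<not> P (\<sigma>!(i-1))" using i unfolding St_def by auto
      then show "I \<in> intervals P \<sigma>" using Jprops[OF i(1)] i(2) unfolding intervals_def g_def n_def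
        by blast
    qed
  qed
  have inj: "inj_on g St"
  proof (rule inj_onI)
    fix i i' assume i: "i \<in> St" and i': "i' \<in> St" and e: "g i = g i'"
    have le: "i' \<le> i" if "i \<in> St" "i' \<in> St" "g i = g i'" for i i'
    proof -
      have "\<sigma>!i \<in> g i'" using that Jprops[of i] unfolding g_def by (metis atLeastAtMost_iff image_eqI order_refl)
      then obtain l where l: "i' \<le> l" "l \<le> J i'" "\<sigma>!i = \<sigma>!l" unfolding g_def by auto
      have "l < n" using l Jprops[OF that(2)] by linarith
      moreover have "i < n" using that unfolding St_def n_def by auto
      ultimately have "i = l" using l(3) dist unfolding n_def by (simp add: nth_eq_iff_index_eq)
      then show ?thesis using l by simp
    qed
    show "i = i'" using le[OF i i' e] le[OF i' i e[symmetric]] by simp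
  qed
  show ?thesis unfolding eq St_def[symmetric] using card_image[OF inj] by simp
qed

lemma fas_mem: "(x, y) \<in> fas A \<sigma> \<longleftrightarrow> (x, y) \<in> A \<and> (\<exists>a b. a < b \<and> b < length \<sigma> \<and> \<sigma>!a = y \<and> \<sigma>!b = x)"
  by (simp add: fas_def)

lemma fas_iff:
  assumes dist: "distinct \<sigma>" and i: "i < length \<sigma>" and j: "j < length \<sigma>"
  shows "(\<sigma>!i, \<sigma>!j) \<in> fas A \<sigma> \<longleftrightarrow> (\<sigma>!i, \<sigma>!j) \<in> A \<and> j < i"
proof
  assume "(\<sigma>!i, \<sigma>!j) \<in> fas A \<sigma>"
  then obtain a b where ab: "(\<sigma>!i, \<sigma>!j) \<in> A" "a < b" "b < length \<sigma>" "\<sigma>!a = \<sigma>!j" "\<sigma>!b = \<sigma>!i"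
    unfolding fas_mem by blast
  have "a = j" "b = i" using ab dist i j by (auto simp: nth_eq_iff_index_eq)
  then show "(\<sigma>!i, \<sigma>!j) \<in> A \<and> j < i" using ab by simp
next
  assume "(\<sigma>!i, \<sigma>!j) \<in> A \<and> j < i"
  then show "(\<sigma>!i, \<sigma>!j) \<in> fas A \<sigma>" unfolding fas_mem using i by blast
qed

lemma adj_swap:
  assumes T: "tournament V A" and M: "min_fas V A \<sigma>"
    and i: "i + 1 < length \<sigma>" and arc: "(\<sigma>!(i+1), \<sigma>!i) \<in> A"
  shows False
proof -
  define n where "n = length \<sigma>"
  have dist: "distinct \<sigma>" and V: "set \<sigma> = V" using M unfolding min_fas_def is_ordering_def by auto
  define t where "t l = (if l = i then i+1 else if l = i+1 then i else l)" for l
  define \<tau> where "\<tau> = map (\<lambda>l. \<sigma>!(t l)) [0..<n]"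
  have tlt: "l < n \<Longrightarrow> t l < n" for l using i unfolding t_def n_def by auto
  have tinj: "t a = t b \<Longrightarrow> a = b" for a b unfolding t_def by (auto split: if_splits)
  have tsurj: "l < n \<Longrightarrow> \<exists>a<n. t a = l" for l
    using i unfolding t_def n_def by (metis add_lessD1 less_add_one)
  have len: "length \<tau> = n" unfolding \<tau>_def by simp
  have tnth: "a < n \<Longrightarrow> \<tau>!a = \<sigma>!(t a)" for a unfolding \<tau>_def by simp
  have "distinct \<tau>"
    unfolding distinct_conv_nth len
  proof (intro allI impI)
    fix a b assume "a < n" "b < n" "a \<noteq> b"
    then show "\<tau>!a \<noteq> \<tau>!b" using tnth tlt tinj dist unfolding n_def
      by (auto simp: nth_eq_iff_index_eq)
  qed
  moreover have "set \<tau> = V"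
  proof -
    have "set \<tau> = (\<lambda>l. \<sigma>!(t l)) ` {..<n}" unfolding \<tau>_def by auto
    also have "\<dots> = (\<lambda>l. \<sigma>!l) ` {..<n}"
    proof
      show "(\<lambda>l. \<sigma>!(t l)) ` {..<n} \<subseteq> (\<lambda>l. \<sigma>!l) ` {..<n}" using tlt by auto
      show "(\<lambda>l. \<sigma>!l) ` {..<n} \<subseteq> (\<lambda>l. \<sigma>!(t l)) ` {..<n}"
      proof
        fix x assume "x \<in> (\<lambda>l. \<sigma>!l) ` {..<n}"
        then obtain l where l: "l < n" "x = \<sigma>!l" by auto
        then obtain a where "a < n" "t a = l" using tsurj by blast
        then show "x \<in> (\<lambda>l. \<sigma>!(t l)) ` {..<n}" using l by auto
      qed
    qed
    also have "\<dots> = set \<sigma>" unfolding n_def by (auto simp: in_set_conv_nth)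
    finally show ?thesis using V by simp
  qed
  ultimately have ord: "is_ordering V \<tau>" unfolding is_ordering_def by simp
  have Asub: "A \<subseteq> V \<times> V" and finV: "finite V" using T unfolding tournament_def by auto
  have finS: "finite (fas A \<sigma>)"
    by (rule finite_subset[of _ "V \<times> V"]) (use Asub finV in \<open>auto simp: fas_def\<close>)
  have antis: "(\<sigma>!i, \<sigma>!(i+1)) \<notin> A"
  proof -
    have "\<sigma>!i \<in> V" "\<sigma>!(i+1) \<in> V" using i V by auto
    moreover have "\<sigma>!i \<noteq> \<sigma>!(i+1)" using dist i by (simp add: nth_eq_iff_index_eq)
    ultimately show ?thesis using T arc unfolding tournament_def by blast
  qed
  have sub: "fas A \<tau> \<subseteq> fas A \<sigma> - {(\<sigma>!(i+1), \<sigma>!i)}"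
  proof
    fix e assume e0: "e \<in> fas A \<tau>"
    obtain x y where xy: "e = (x, y)" by (cases e)
    have "(x, y) \<in> fas A \<tau>" using e0 xy by simp
    then obtain a b where e: "e = (x, y)" "(x, y) \<in> A" "a < b" "b < n" "\<tau>!a = y" "\<tau>!b = x"
      using xy unfolding fas_mem len by blast
    have a: "a < n" using e by simp
    have ya: "y = \<sigma>!(t a)" and xb: "x = \<sigma>!(t b)" using e tnth a by auto
    have "t a \<noteq> t b" using tinj e(3) by auto
    have ne: "(x, y) \<noteq> (\<sigma>!(i+1), \<sigma>!i)"
    proof
      assume "(x, y) = (\<sigma>!(i+1), \<sigma>!i)"
      hence "t b = i + 1" "t a = i" using xb ya dist tlt a e(4) i unfolding n_def
        by (auto simp: nth_eq_iff_index_eq)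
      hence "b = i" "a = i + 1" unfolding t_def by (auto split: if_splits)
      then show False using e(3) by simp
    qed
    show "e \<in> fas A \<sigma> - {(\<sigma>!(i+1), \<sigma>!i)}"
    proof (cases "t a < t b")
      case True
      then have "(x, y) \<in> fas A \<sigma>" unfolding fas_mem using e(2) tlt[OF e(4)] xb ya n_def by blast
      then show ?thesis using ne e(1) by simp
    next
      case False
      hence "t b < t a" using \<open>t a \<noteq> t b\<close> by simp
      hence "a = i" "b = i + 1" using e(3) unfolding t_def by (auto split: if_splits)
      hence "x = \<sigma>!i" "y = \<sigma>!(i+1)" using xb ya unfolding t_def by auto
      then show ?thesis using e(2) antis by simp
    qed
  qed
  have "(\<sigma>!(i+1), \<sigma>!i) \<in> fas A \<sigma>" unfolding fas_mem using arc i by (intro conjI exI[of _ i] exI[of _ "i+1"]) auto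
  hence "fas A \<tau> \<subset> fas A \<sigma>" using sub by blast
  hence "card (fas A \<tau>) < card (fas A \<sigma>)" using finS by (rule psubset_card_mono[rotated])
  moreover have "card (fas A \<sigma>) \<le> card (fas A \<tau>)" using M ord unfolding min_fas_def by blast
  ultimately show False by simp
qed

lemma sum_indicator_card:
  fixes n :: nat
  assumes "S \<subseteq> {..<n}"
  shows "(\<Sum>i<n. if i \<in> S then (1::int) else 0) = int (card S)"
proof -
  have "(\<Sum>i<n. if i \<in> S then (1::int) else 0) = (\<Sum>i\<in>{i\<in>{..<n}. i \<in> S}. 1)"
    by (rule sum.inter_filter[symmetric]) simp
  also have "{i\<in>{..<n}. i \<in> S} = S" using assms by auto
  finally show ?thesis by simp
qed

lemma intervals_fin: "finite (intervals P \<sigma>)"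
proof (rule finite_subset)
  show "intervals P \<sigma> \<subseteq> Pow (set \<sigma>)" unfolding intervals_def by auto
qed simp

lemma intervals_elem:
  assumes "I \<in> intervals P \<sigma>"
  obtains i j where "I = (\<lambda>l. \<sigma>!l) ` {i..j}" "i \<le> j" "j < length \<sigma>" "\<forall>l\<in>{i..j}. P (\<sigma>!l)"
    "i = 0 \<or> \<not> P (\<sigma>!(i-1))" "j + 1 = length \<sigma> \<or> \<not> P (\<sigma>!(j+1))"
  using assms unfolding intervals_def by blast

context starpos begin

lemma card_fi:
  assumes Sdef: "S = {(x, \<sigma>!p) | x. x \<in> U} \<union> {(\<sigma>!p, y) | y. y \<in> W}"
    and UW: "U \<union> W \<noteq> {}"
  shows "int (card (feedback_intervals S \<sigma>)) = mc"
proof -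
  define H where "H = head_fv S"
  define T where "T = tail_fv S"
  have eqp: "\<sigma>!l = \<sigma>!p \<longleftrightarrow> l = p" if "l < n" for l
    using that p_lt dist by (simp add: nth_eq_iff_index_eq)
  have Hl: "H (\<sigma>!l) \<longleftrightarrow> w l \<or> (l = p \<and> U \<noteq> {})" if l: "l < n" for l
  proof -
    have "H (\<sigma>!l) \<longleftrightarrow> (\<sigma>!l = \<sigma>!p \<and> U \<noteq> {}) \<or> \<sigma>!l \<in> W"
      unfolding H_def head_fv_def Sdef by blast
    then show ?thesis using eqp[OF l] l unfolding w_def by blast
  qed
  have Tl: "T (\<sigma>!l) \<longleftrightarrow> u l \<or> (l = p \<and> W \<noteq> {})" if l: "l < n" for l
  proof -
    have "T (\<sigma>!l) \<longleftrightarrow> (\<sigma>!l = \<sigma>!p \<and> W \<noteq> {}) \<or> \<sigma>!l \<in> U"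
      unfolding T_def tail_fv_def Sdef by blast
    then show ?thesis using eqp[OF l] l unfolding u_def by blast
  qed
  have u1: "\<not> u (p + 1)" using min1 unfolding u_def by auto
  have w1: "p > 0 \<Longrightarrow> \<not> w (p - 1)" using min2 unfolding w_def by auto
  have wn: "w i \<Longrightarrow> i < n" and un: "u i \<Longrightarrow> i < n" for i unfolding w_def u_def by auto
  define WS where "WS = {i. i < n \<and> w i \<and> (i = 0 \<or> \<not> w (i - 1))}"
  define US where "US = {i. i < n \<and> u i \<and> (i = 0 \<or> \<not> u (i - 1))}"
  define StH where "StH = {i. i < n \<and> H (\<sigma>!i) \<and> (i = 0 \<or> \<not> H (\<sigma>!(i-1)))}"
  define StT where "StT = {i. i < n \<and> T (\<sigma>!i) \<and> (i = 0 \<or> \<not> T (\<sigma>!(i-1)))}"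
  have StH_eq: "StH = WS \<union> (if U \<noteq> {} then {p} else {})"
  proof (rule set_eqI)
    fix i
    show "i \<in> StH \<longleftrightarrow> i \<in> WS \<union> (if U \<noteq> {} then {p} else {})"
    proof (cases "i < n")
      case False
      then show ?thesis unfolding StH_def WS_def using p_lt by auto
    next
      case True
      have Hi: "H (\<sigma>!i) \<longleftrightarrow> w i \<or> (i = p \<and> U \<noteq> {})" using Hl[OF True] .
      have Hi1: "i > 0 \<Longrightarrow> H (\<sigma>!(i-1)) \<longleftrightarrow> w (i-1) \<or> (i - 1 = p \<and> U \<noteq> {})"
        using Hl[of "i-1"] True by simp
      show ?thesis
      proof (cases "w i")
        case True
        have "i < p" using w_lt[OF True] .
        then show ?thesis using Hi Hi1 True \<open>i < n\<close> unfolding StH_def WS_def by auto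
      next
        case False
        have "i \<in> StH \<longleftrightarrow> i = p \<and> U \<noteq> {}"
        proof
          assume "i \<in> StH" then show "i = p \<and> U \<noteq> {}" unfolding StH_def using Hi False by blast
        next
          assume a: "i = p \<and> U \<noteq> {}"
          have "i = 0 \<or> \<not> H (\<sigma>!(i-1))"
          proof (cases "i = 0")
            case False
            then show ?thesis using Hi1 w1 a by auto
          qed simp
          then show "i \<in> StH" unfolding StH_def using a Hi \<open>i < n\<close> by blast
        qed
        moreover have "i \<notin> WS" unfolding WS_def using False by blast
        ultimately show ?thesis by auto
      qed
    qed
  qed
  have StT_eq: "StT = US \<union> (if W \<noteq> {} then {p} else {})"
  proof (rule set_eqI)
    fix i
    show "i \<in> StT \<longleftrightarrow> i \<in> US \<union> (if W \<noteq> {} then {p} else {})"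
    proof (cases "i < n")
      case False
      then show ?thesis unfolding StT_def US_def using p_lt by auto
    next
      case True
      have Ti: "T (\<sigma>!i) \<longleftrightarrow> u i \<or> (i = p \<and> W \<noteq> {})" using Tl[OF True] .
      have Ti1: "i > 0 \<Longrightarrow> T (\<sigma>!(i-1)) \<longleftrightarrow> u (i-1) \<or> (i - 1 = p \<and> W \<noteq> {})"
        using Tl[of "i-1"] True by simp
      show ?thesis
      proof (cases "u i")
        case True
        have "p < i" using u_gt[OF True] .
        moreover have "i - 1 \<noteq> p" using u1 True calculation by (metis Suc_eq_plus1 Suc_pred' gr_implies_not0 neq0_conv)
        ultimately show ?thesis using Ti Ti1 True \<open>i < n\<close> unfolding StT_def US_def by auto
      next
        case False
        have "i \<in> StT \<longleftrightarrow> i = p \<and> W \<noteq> {}"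
        proof
          assume "i \<in> StT" then show "i = p \<and> W \<noteq> {}" unfolding StT_def using Ti False by blast
        next
          assume a: "i = p \<and> W \<noteq> {}"
          have "i = 0 \<or> \<not> T (\<sigma>!(i-1))"
          proof (cases "i = 0")
            case False
            have "\<not> u (p - 1)" using u_gt by fastforce
            then show ?thesis using Ti1 False a by auto
          qed simp
          then show "i \<in> StT" unfolding StT_def using a Ti \<open>i < n\<close> by blast
        qed
        moreover have "i \<notin> US" unfolding US_def using False by blast
        ultimately show ?thesis by auto
      qed
    qed
  qed
  have finWS: "finite WS" and finUS: "finite US" unfolding WS_def US_def by auto
  have pWS: "p \<notin> WS" using nwp unfolding WS_def by blast
  have pUS: "p \<notin> US" using nup unfolding US_def by blast
  have cH: "card (intervals H \<sigma>) = card WS + (if U \<noteq> {} then 1 else 0)"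
    unfolding card_intervals[OF dist] StH_def[symmetric] StH_eq using finWS pWS by auto
  have cT: "card (intervals T \<sigma>) = card US + (if W \<noteq> {} then 1 else 0)"
    unfolding card_intervals[OF dist] StT_def[symmetric] StT_eq using finUS pUS by auto
  have HT: "H (\<sigma>!l) \<and> T (\<sigma>!l) \<Longrightarrow> l = p" if "l < n" for l
    using Hl[OF that] Tl[OF that] u_gt w_lt by fastforce
  have Isub: "I = {\<sigma>!p}" if I: "I \<in> intervals H \<sigma> \<inter> intervals T \<sigma>" for I
  proof -
    obtain i j where ij: "I = (\<lambda>l. \<sigma>!l) ` {i..j}" "i \<le> j" "j < n" "\<forall>l\<in>{i..j}. H (\<sigma>!l)"
      using I by (auto elim: intervals_elem)
    obtain i' j' where ij': "I = (\<lambda>l. \<sigma>!l) ` {i'..j'}" "i' \<le> j'" "j' < n" "\<forall>l\<in>{i'..j'}. T (\<sigma>!l)"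
      using I by (auto elim: intervals_elem)
    have "x = \<sigma>!p" if x: "x \<in> I" for x
    proof -
      obtain l where l: "l \<in> {i..j}" "x = \<sigma>!l" using x ij(1) by auto
      obtain l' where l': "l' \<in> {i'..j'}" "x = \<sigma>!l'" using x ij'(1) by auto
      have "l = l'" using l l' ij ij' dist by (auto simp: nth_eq_iff_index_eq)
      hence "H (\<sigma>!l) \<and> T (\<sigma>!l)" using l l' ij ij' by auto
      hence "l = p" using HT l ij by auto
      then show ?thesis using l by simp
    qed
    moreover have "I \<noteq> {}" using ij by auto
    ultimately show ?thesis by blast
  qed
  have cI: "card (intervals H \<sigma> \<inter> intervals T \<sigma>) = (if U \<noteq> {} \<and> W \<noteq> {} then 1 else 0)"
  proof (cases "U \<noteq> {} \<and> W \<noteq> {}")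
    case True
    have Hp: "H (\<sigma>!p)" and Tp: "T (\<sigma>!p)" using Hl[OF p_lt] Tl[OF p_lt] True by auto
    have nH: "p = 0 \<or> \<not> H (\<sigma>!(p-1))"
    proof (cases "p = 0")
      case False
      then show ?thesis using Hl[of "p-1"] w1 p_lt by auto
    qed simp
    have nH2: "p + 1 = n \<or> \<not> H (\<sigma>!(p+1))"
    proof (cases "p + 1 < n")
      case True
      have "\<not> w (p+1)" using w_lt by fastforce
      then show ?thesis using Hl[OF True] by auto
    qed (use p_lt in auto)
    have nT: "p = 0 \<or> \<not> T (\<sigma>!(p-1))"
    proof (cases "p = 0")
      case False
      have "\<not> u (p - 1)" using u_gt by fastforce
      then show ?thesis using Tl[of "p-1"] False p_lt by auto
    qed simp
    have nT2: "p + 1 = n \<or> \<not> T (\<sigma>!(p+1))"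
    proof (cases "p + 1 < n")
      case True
      then show ?thesis using Tl[OF True] u1 by auto
    qed (use p_lt in auto)
    have sp: "(\<lambda>l. \<sigma>!l) ` {p..p} = {\<sigma>!p}" by simp
    have "{\<sigma>!p} \<in> intervals H \<sigma>" unfolding intervals_def
      using Hp nH nH2 p_lt sp by force
    moreover have "{\<sigma>!p} \<in> intervals T \<sigma>" unfolding intervals_def
      using Tp nT nT2 p_lt sp by force
    ultimately have "intervals H \<sigma> \<inter> intervals T \<sigma> = {{\<sigma>!p}}" using Isub by blast
    then show ?thesis using True by simp
  next
    case False
    have "intervals H \<sigma> \<inter> intervals T \<sigma> = {}"
    proof (rule ccontr)
      assume "intervals H \<sigma> \<inter> intervals T \<sigma> \<noteq> {}"
      then obtain I where I: "I \<in> intervals H \<sigma> \<inter> intervals T \<sigma>" by blast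
      hence "I = {\<sigma>!p}" by (rule Isub)
      obtain i j where ij: "I = (\<lambda>l. \<sigma>!l) ` {i..j}" "i \<le> j" "j < n" "\<forall>l\<in>{i..j}. H (\<sigma>!l)"
        using I by (auto elim: intervals_elem)
      obtain i' j' where ij': "I = (\<lambda>l. \<sigma>!l) ` {i'..j'}" "i' \<le> j'" "j' < n" "\<forall>l\<in>{i'..j'}. T (\<sigma>!l)"
        using I by (auto elim: intervals_elem)
      have "\<sigma>!i \<in> I" "\<sigma>!i' \<in> I" using ij ij' by auto
      hence "\<sigma>!i = \<sigma>!p" "\<sigma>!i' = \<sigma>!p" using \<open>I = {\<sigma>!p}\<close> by auto
      moreover have "H (\<sigma>!i)" "T (\<sigma>!i')" using ij(2,4) ij'(2,4) by auto
      ultimately have "H (\<sigma>!p)" "T (\<sigma>!p)" by auto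
      then show False using Hl[OF p_lt] Tl[OF p_lt] False nwp nup by auto
    qed
    then show ?thesis using False by simp
  qed
  have fi: "feedback_intervals S \<sigma> = intervals H \<sigma> \<union> intervals T \<sigma>"
    unfolding feedback_intervals_def H_def T_def ..
  have "card (intervals H \<sigma>) + card (intervals T \<sigma>) =
        card (feedback_intervals S \<sigma>) + card (intervals H \<sigma> \<inter> intervals T \<sigma>)"
    unfolding fi by (rule card_Un_Int[OF intervals_fin intervals_fin])
  hence cfi: "card (feedback_intervals S \<sigma>) = card WS + card US + 1"
    using cH cT cI UW by (auto split: if_splits)
  have sU: "(\<Sum>i<n. if u i then 1 - e' i else 0) = int (card US)"
  proof -
    have "(\<Sum>i<n. if u i then 1 - e' i else 0) = (\<Sum>i<n. if i \<in> US then (1::int) else 0)"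
    proof (rule sum.cong[OF refl])
      fix i assume i: "i \<in> {..<n}"
      show "(if u i then 1 - e' i else 0) = (if i \<in> US then (1::int) else 0)"
      proof (cases "u i")
        case True
        have pi: "p < i" using u_gt[OF True] .
        have "i - 1 \<noteq> p" using u1 True pi by (metis Suc_eq_plus1 Suc_pred' gr_implies_not0 neq0_conv)
        moreover have "\<not> w (i - 1)" using w_lt pi by fastforce
        ultimately have "e' i = (if u (i - 1) then 1 else 0)" using pi unfolding e'_def e_def by auto
        then show ?thesis using True i pi unfolding US_def by auto
      qed (auto simp: US_def)
    qed
    also have "\<dots> = int (card US)" by (rule sum_indicator_card) (auto simp: US_def)
    finally show ?thesis .
  qed
  have sW: "(\<Sum>i<n. if w i then 1 + e' i else 0) = int (card WS)"
  proof -
    have "(\<Sum>i<n. if w i then 1 + e' i else 0) = (\<Sum>i<n. if i \<in> WS then (1::int) else 0)"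
    proof (rule sum.cong[OF refl])
      fix i assume i: "i \<in> {..<n}"
      show "(if w i then 1 + e' i else 0) = (if i \<in> WS then (1::int) else 0)"
      proof (cases "w i")
        case True
        have ip: "i < p" using w_lt[OF True] .
        show ?thesis
        proof (cases "i = 0")
          case True
          then show ?thesis using \<open>w i\<close> i unfolding WS_def e'_def by auto
        next
          case False
          have "\<not> u (i - 1)" using u_gt ip by fastforce
          moreover have "i - 1 \<noteq> p" using ip by simp
          ultimately have "e' i = (if w (i - 1) then -1 else 0)" using False unfolding e'_def e_def by auto
          then show ?thesis using \<open>w i\<close> i False unfolding WS_def by auto
        qed
      qed (auto simp: WS_def)
    qed
    also have "\<dots> = int (card WS)" by (rule sum_indicator_card) (auto simp: WS_def)
    finally show ?thesis .
  qed
  show ?thesis unfolding mc_def sU sW cfi by simp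
qed

end

theorem mainTheorem8:
  fixes V :: "'a set" and A :: "('a \<times> 'a) set" and \<sigma> :: "'a list" and k :: nat
  assumes "tournament V A"
    and "strongly_connected V A"
    and "min_fas V A \<sigma>"
    and "is_directed_star (fas A \<sigma>)"
    and "k \<ge> 2"
  shows "k_AW k V A \<longleftrightarrow> gcd k (card (feedback_intervals (fas A \<sigma>) \<sigma>)) = 1"
proof -
  note T = assms(1) and M = assms(3)
  define n where "n = length \<sigma>"
  have dist: "distinct \<sigma>" and V: "set \<sigma> = V" using M unfolding min_fas_def is_ordering_def by auto
  obtain c U W where st0: "finite U \<and> finite W \<and> U \<inter> W = {} \<and> c \<notin> U \<and> c \<notin> W \<and>
    fas A \<sigma> = {(u, c) | u. u \<in> U} \<union> {(c, w) | w. w \<in> W} \<and>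
    arc_verts (fas A \<sigma>) = insert c (U \<union> W)"
    using assms(4) unfolding is_directed_star_def by (elim exE) (rule that)
  have st6: "fas A \<sigma> = {(u, c) | u. u \<in> U} \<union> {(c, w) | w. w \<in> W}"
    using st0 by (elim conjE) assumption
  have st7: "arc_verts (fas A \<sigma>) = insert c (U \<union> W)"
    using st0 by (elim conjE) assumption
  have Asub: "A \<subseteq> V \<times> V" and irr: "\<And>v. (v, v) \<notin> A"
    and tr: "\<And>v w. v \<in> V \<Longrightarrow> w \<in> V \<Longrightarrow> v \<noteq> w \<Longrightarrow> (v, w) \<in> A \<longleftrightarrow> (w, v) \<notin> A"
    using T unfolding tournament_def by blast+
  have SA: "fas A \<sigma> \<subseteq> A" unfolding fas_def by auto
  have avV: "arc_verts (fas A \<sigma>) \<subseteq> V" unfolding arc_verts_def using SA Asub by force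
  have cV: "c \<in> V" using avV st7 by blast
  then obtain p where p: "p < n" "\<sigma>!p = c" using V unfolding n_def by (auto simp: in_set_conv_nth)
  have UW: "U \<union> W \<noteq> {}"
  proof
    assume "U \<union> W = {}"
    hence "fas A \<sigma> = {}" unfolding st6 by simp
    hence "arc_verts (fas A \<sigma>) = {}" unfolding arc_verts_def by simp
    then show False using st7 by simp
  qed
  have Smem: "(x, y) \<in> fas A \<sigma> \<longleftrightarrow> (x \<in> U \<and> y = c) \<or> (x = c \<and> y \<in> W)" for x y
    unfolding st6 by auto
  have sp: "starpos A \<sigma> p U W"
  proof
    show "distinct \<sigma>" by (rule dist)
    show "p < length \<sigma>" using p n_def by simp
    show "\<And>v. (v, v) \<notin> A" by (rule irr)
    show "(\<sigma>!i, \<sigma>!j) \<in> A \<longleftrightarrow> (\<sigma>!j, \<sigma>!i) \<notin> A" if "i < length \<sigma>" "j < length \<sigma>" "i \<noteq> j" for i j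
      using tr[of "\<sigma>!i" "\<sigma>!j"] that V dist by (auto simp: nth_eq_iff_index_eq)
    show "((\<sigma>!i, \<sigma>!j) \<in> A \<and> j < i) \<longleftrightarrow> ((\<sigma>!i \<in> U \<and> j = p) \<or> (i = p \<and> \<sigma>!j \<in> W))"
      if i: "i < length \<sigma>" and j: "j < length \<sigma>" for i j
    proof -
      have "((\<sigma>!i, \<sigma>!j) \<in> A \<and> j < i) \<longleftrightarrow> (\<sigma>!i, \<sigma>!j) \<in> fas A \<sigma>" using fas_iff[OF dist i j] by simp
      also have "\<dots> \<longleftrightarrow> (\<sigma>!i \<in> U \<and> \<sigma>!j = c) \<or> (\<sigma>!i = c \<and> \<sigma>!j \<in> W)" by (rule Smem)
      also have "\<sigma>!j = c \<longleftrightarrow> j = p" using p j dist unfolding n_def by (auto simp: nth_eq_iff_index_eq)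
      also have "\<sigma>!i = c \<longleftrightarrow> i = p" using p i dist unfolding n_def by (auto simp: nth_eq_iff_index_eq)
      finally show ?thesis .
    qed
    show "\<sigma>!(p+1) \<notin> U" if "p + 1 < length \<sigma>"
    proof
      assume "\<sigma>!(p+1) \<in> U"
      hence "(\<sigma>!(p+1), \<sigma>!p) \<in> A" using Smem[of "\<sigma>!(p+1)" c] SA p by auto
      then show False using adj_swap[OF T M that] by simp
    qed
    show "\<sigma>!(p-1) \<notin> W" if "0 < p"
    proof
      assume "\<sigma>!(p-1) \<in> W"
      hence "(\<sigma>!(p-1+1), \<sigma>!(p-1)) \<in> A" using Smem[of c "\<sigma>!(p-1)"] SA p that by auto
      moreover have "p - 1 + 1 < length \<sigma>" using p that n_def by simp
      ultimately show False using adj_swap[OF T M] by blast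
    qed
  qed
  have kpos: "(0::nat) < k" and kipos: "(0::int) < int k" using assms(5) by auto
  have "k_AW k V A \<longleftrightarrow> (\<forall>g. \<exists>X. \<forall>j<length \<sigma>. [Nv A \<sigma> X j = g j] (mod int k))"
    by (rule bridge[OF dist V kpos])
  also have "\<dots> \<longleftrightarrow> (\<forall>X. (\<forall>j<length \<sigma>. [Nv A \<sigma> X j = 0] (mod int k)) \<longrightarrow> (\<forall>i<length \<sigma>. [X i = 0] (mod int k)))"
    by (rule surj_iff_inj[OF kipos])
  also have "\<dots> \<longleftrightarrow> coprime (int k) (starpos.mc \<sigma> p U W)"
    by (rule starpos.kernel_iff[OF sp kipos])
  also have "starpos.mc \<sigma> p U W = int (card (feedback_intervals (fas A \<sigma>) \<sigma>))"
    using starpos.card_fi[OF sp _ UW, of "fas A \<sigma>"] st6 p(2) by simp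
  also have "coprime (int k) (int (card (feedback_intervals (fas A \<sigma>) \<sigma>))) \<longleftrightarrow>
     gcd k (card (feedback_intervals (fas A \<sigma>) \<sigma>)) = 1"
    by (simp add: coprime_iff_gcd_eq_1)
  finally show ?thesis .
qed

end
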